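(* Let $r \le \min(M,N)$ be positive integers and let $\mathcal{P}=\mathcal{B}_{1,+}=\{\mathbf{x}\in\mathbb{R}^r \mid \mathbf{x}\ge\mathbf{0},\ \mathbf{1}^T\mathbf{x}\le 1\}$. Let $\mathbf{H}_g\in\mathbb{R}^{M\times r}$ have full column rank, let $\mathbf{S}_g\in\mathbb{R}^{r\times N}$ have all of its columns in $\mathcal{P}$, and set $\mathbf{Y}=\mathbf{H}_g\mathbf{S}_g$. Suppose $\mathbf{S}_g$ is a sufficiently scattered factor corresponding to $\mathcal{P}$ (as defined in the context). Consider the Det-Max optimization problem $$\max_{\mathbf{H}\in\mathbb{R}^{M\times r},\ \mathbf{S}\in\mathbb{R}^{r\times N}} \det(\mathbf{S}\mathbf{S}^T)\quad\text{subject to}\quad \mathbf{Y}=\mathbf{H}\mathbf{S},\ \ \mathbf{S}_{:,j}\in\mathcal{P}\ \ (j=1,\dots,N).$$ Then every global optimum $(\mathbf{H}_*,\mathbf{S}_* )$ of this problem satisfies $$\mathbf{H}_*=\mathbf{H}_g\boldsymbol{\Pi}^T,\qquad \mathbf{S}_*=\boldsymbol{\Pi}\mathbf{S}_g,$$ for some permutation matrix $\boldsymbol{\Pi}\in\mathbb{R}^{r\times r}$.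
   Context: $\mathbf{1}$ and $\mathbf{0}$ denote the all-ones and all-zeros vectors; $\mathbf{x}\ge\mathbf{0}$ is componentwise. $\mathbf{S}_{:,j}$ denotes the $j$-th column of $\mathbf{S}$; $\mathrm{conv}(\mathbf{S})$ is the convex hull of the columns of $\mathbf{S}$. For a convex polytope $\mathcal{P}\subset\mathbb{R}^r$ with nonempty interior, $\mathcal{E}_\mathcal{P}$ denotes its maximum volume inscribed ellipsoid (MVIE), i.e. the (unique) ellipsoid of maximal volume contained in $\mathcal{P}$, written $\mathcal{E}_\mathcal{P}=\{\mathbf{C}_\mathcal{P}\mathbf{u}+\mathbf{g}_\mathcal{P}\mid \|\mathbf{u}\|_2\le 1\}$ with $\mathbf{C}_\mathcal{P}\succeq 0$ and center $\mathbf{g}_\mathcal{P}$. For a set $C\subset\mathbb{R}^r$ and point $\mathbf{d}$, the polar of $C$ with respect to $\mathbf{d}$ is $C^{*,\mathbf{d}}=\{\mathbf{x}\in\mathbb{R}^r\mid \langle\mathbf{x},\mathbf{y}-\mathbf{d}\rangle\le 1\ \forall \mathbf{y}\in C\}$. $\mathrm{bd}(\cdot)$ denotes boundary and $\mathrm{ext}(\cdot)$ the set of extreme points (vertices). A matrix $\mathbf{S}\in\mathbb{R}^{r\times N}$ is called a sufficiently scattered factor corresponding to $\mathcal{P}$ if (i) $\mathcal{P}\supseteq\mathrm{conv}(\mathbf{S})\supset\mathcal{E}_\mathcal{P}$, and (ii) $\mathrm{conv}(\mathbf{S})^{*,\mathbf{g}_\mathcal{P}}\cap\mathrm{bd}(\mathcal{E}_\mathcal{P}^{*,\mathbf{g}_\mathcal{P}})=\mathrm{ext}(\mathcal{P}^{*,\mathbf{g}_\mathcal{P}})$.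 *)

theory Defs
  imports "HOL-Analysis.Analysis"
begin

text \<open>The polytope B_{1,+} = {x >= 0, 1^T x <= 1} in R^r.\<close>
definition simplex_B1plus :: "(real^'r) set" where
  "simplex_B1plus = {x. (\<forall>i. 0 \<le> x $ i) \<and> (\<Sum>i\<in>UNIV. x $ i) \<le> 1}"

text \<open>Symmetric positive semidefinite matrices.\<close>
definition psd :: "real^'r^'r \<Rightarrow> bool" where
  "psd C \<longleftrightarrow> transpose C = C \<and> (\<forall>u. 0 \<le> u \<bullet> (C *v u))"

text \<open>The ellipsoid {C u + g | norm u <= 1}.\<close>
definition ellipsoid :: "real^'r^'r \<Rightarrow> real^'r \<Rightarrow> (real^'r) set" where
  "ellipsoid C g = {C *v u + g | u. norm u \<le> 1}"

text \<open>(C, g) describes the maximum volume inscribed ellipsoid of P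
  (volume = Lebesgue measure).\<close>
definition is_MVIE :: "(real^'r) set \<Rightarrow> real^'r^'r \<Rightarrow> real^'r \<Rightarrow> bool" where
  "is_MVIE P C g \<longleftrightarrow> psd C \<and> ellipsoid C g \<subseteq> P \<and>
     (\<forall>C' g'. psd C' \<and> ellipsoid C' g' \<subseteq> P \<longrightarrow>
        emeasure lborel (ellipsoid C' g') \<le> emeasure lborel (ellipsoid C g))"

text \<open>Polar of a set C with respect to a point d.\<close>
definition polar_wrt :: "(real^'r) set \<Rightarrow> real^'r \<Rightarrow> (real^'r) set" where
  "polar_wrt C d = {x. \<forall>y\<in>C. x \<bullet> (y - d) \<le> 1}"

text \<open>Set of columns of a matrix (as a set of points).\<close>
definition col_set :: "real^'n^'r \<Rightarrow> (real^'r) set" where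
  "col_set S = {column j S | j. True}"

text \<open>Sufficiently scattered factor corresponding to P.\<close>
definition suff_scattered :: "real^'n^'r \<Rightarrow> (real^'r) set \<Rightarrow> bool" where
  "suff_scattered S P \<longleftrightarrow> (\<exists>C g. is_MVIE P C g \<and>
     convex hull (col_set S) \<subseteq> P \<and> ellipsoid C g \<subseteq> convex hull (col_set S) \<and>
     polar_wrt (convex hull (col_set S)) g \<inter> frontier (polar_wrt (ellipsoid C g) g)
       = {v. v extreme_point_of (polar_wrt P g)})"

text \<open>Permutation matrices.\<close>
definition perm_matrix :: "real^'r^'r \<Rightarrow> bool" where
  "perm_matrix Q \<longleftrightarrow> (\<exists>p. p permutes (UNIV::'r set) \<and>
     Q = (\<chi> i j. if p i = j then 1 else 0))"

end

theory Submission
  imports Defs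
begin

lemma det_shear_gen:
  fixes m n :: "'n::finite"
  assumes "m \<noteq> n"
  shows "det (matrix (\<lambda>v::real^'n. \<chi> i. if i = m then v $ m + v $ n else v $ i)) = 1"
proof -
  have "matrix (\<lambda>v::real^'n. \<chi> i. if i = m then v $ m + v $ n else v $ i)
       = (\<chi> k. if k = m then row m (mat 1) + 1 *s row n (mat 1) else row k (mat 1 :: real^'n^'n))"
    by (auto simp: matrix_def axis_def row_def mat_def vec_eq_iff)
  then show ?thesis
    using det_row_operation[OF assms, of "mat 1 :: real^'n^'n" 1] by simp
qed

proposition
 fixes f :: "real^'n::finite \<Rightarrow> real^'n"
  assumes "linear f" "S \<in> lmeasurable"
  shows measurable_linear_image_gen: "(f ` S) \<in> lmeasurable"
    and measure_linear_image_gen: "measure lebesgue (f ` S) = \<bar>det (matrix f)\<bar> * measure lebesgue S" (is "?Q f S")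
proof -
  have "\<forall>S \<in> lmeasurable. (f ` S) \<in> lmeasurable \<and> ?Q f S"
  proof (rule induct_linear_elementary [OF \<open>linear f\<close>]; intro ballI)
    fix f g and S :: "(real,'n) vec set"
    assume "linear f" and "linear g"
      and f [rule_format]: "\<forall>S \<in> lmeasurable. f ` S \<in> lmeasurable \<and> ?Q f S"
      and g [rule_format]: "\<forall>S \<in> lmeasurable. g ` S \<in> lmeasurable \<and> ?Q g S"
      and S: "S \<in> lmeasurable"
    then have gS: "g ` S \<in> lmeasurable"
      by blast
    show "(f \<circ> g) ` S \<in> lmeasurable \<and> ?Q (f \<circ> g) S"
      using f [OF gS] g [OF S] matrix_compose [OF \<open>linear g\<close> \<open>linear f\<close>]
      by (simp add: o_def image_comp abs_mult det_mul)
  next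
    fix f :: "real^'n::_ \<Rightarrow> real^'n::_" and i and S :: "(real^'n::_) set"
    assume "linear f" and 0: "\<And>x. f x $ i = 0" and "S \<in> lmeasurable"
    then have "\<not> inj f"
      by (metis (full_types) linear_injective_imp_surjective one_neq_zero surjE vec_component)
    have detf: "det (matrix f) = 0"
      using \<open>\<not> inj f\<close> det_nz_iff_inj[OF \<open>linear f\<close>] by blast
    show "f ` S \<in> lmeasurable \<and> ?Q f S"
    proof
      show "f ` S \<in> lmeasurable"
        using lmeasurable_iff_indicator_has_integral \<open>linear f\<close> \<open>\<not> inj f\<close> negligible_UNIV negligible_linear_singular_image by blast
      have "measure lebesgue (f ` S) = 0"
        by (meson \<open>\<not> inj f\<close> \<open>linear f\<close> negligible_imp_measure0 negligible_linear_singular_image)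
      also have "\<dots> = \<bar>det (matrix f)\<bar> * measure lebesgue S"
        by (simp add: detf)
      finally show "?Q f S" .
    qed
  next
    fix c and S :: "(real^'n::_) set"
    assume "S \<in> lmeasurable"
    show "(\<lambda>a. \<chi> i. c i * a $ i) ` S \<in> lmeasurable \<and> ?Q (\<lambda>a. \<chi> i. c i * a $ i) S"
    proof
      show "(\<lambda>a. \<chi> i. c i * a $ i) ` S \<in> lmeasurable"
        by (simp add: \<open>S \<in> lmeasurable\<close> measurable_stretch)
      show "?Q (\<lambda>a. \<chi> i. c i * a $ i) S"
        by (simp add: measure_stretch [OF \<open>S \<in> lmeasurable\<close>, of c] axis_def matrix_def det_diagonal)
    qed
  next
    fix m :: "'n" and n :: "'n" and S :: "(real, 'n) vec set"
    assume "m \<noteq> n" and "S \<in> lmeasurable"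
    let ?h = "\<lambda>v::(real, 'n) vec. \<chi> i. v $ Transposition.transpose m n i"
    have lin: "linear ?h"
      by (rule linearI) (simp_all add: plus_vec_def scaleR_vec_def)
    have meq: "measure lebesgue ((\<lambda>v::(real, 'n) vec. \<chi> i. v $ Transposition.transpose m n i) ` cbox a b)
             = measure lebesgue (cbox a b)" for a b
    proof (cases "cbox a b = {}")
      case True then show ?thesis
        by simp
    next
      case False
      then have him: "?h ` (cbox a b) \<noteq> {}"
        by blast
      have eq: "?h ` (cbox a b) = cbox (?h a) (?h b)"
        by (auto simp: image_iff lambda_swap_Galois mem_box_cart) (metis transpose_involutory)+
      show ?thesis
        using him prod.permute [OF permutes_swap_id, where S=UNIV and g="\<lambda>i. (b - a)$i", symmetric]
        by (simp add: eq content_cbox_cart False)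
    qed
    have "(\<chi> i j. if Transposition.transpose m n i = j then 1 else 0) = (\<chi> i j. if j = Transposition.transpose m n i then 1 else (0::real))"
      by (auto intro!: Cart_lambda_cong)
    then have "matrix ?h = transpose(\<chi> i j. mat 1 $ i $ Transposition.transpose m n j)"
      by (auto simp: matrix_eq transpose_def axis_def mat_def matrix_def)
    then have 1: "\<bar>det (matrix ?h)\<bar> = 1"
      by (simp add: det_permute_columns permutes_swap_id sign_swap_id abs_mult)
    show "?h ` S \<in> lmeasurable \<and> ?Q ?h S"
      using measure_linear_sufficient [OF lin \<open>S \<in> lmeasurable\<close>] meq 1 by force
  next
    fix m n :: "'n" and S :: "(real, 'n) vec set"
    assume "m \<noteq> n" and "S \<in> lmeasurable"
    let ?h = "\<lambda>v::(real, 'n) vec. \<chi> i. if i = m then v $ m + v $ n else v $ i"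
    have lin: "linear ?h"
      by (rule linearI) (auto simp: algebra_simps plus_vec_def scaleR_vec_def vec_eq_iff)
    have 1: "det(matrix ?h) = 1"
      using det_shear_gen[OF \<open>m \<noteq> n\<close>] .
    have meq: "measure lebesgue (?h ` (cbox a b)) = measure lebesgue (cbox a b)" for a b
    proof (cases "cbox a b = {}")
      case True then show ?thesis by simp
    next
      case False
      then have ne: "(+) (\<chi> i. if i = n then - a $ n else 0) ` cbox a b \<noteq> {}"
        by auto
      let ?v = "\<chi> i. if i = n then - a $ n else 0"
      have "?h ` cbox a b
            = (+) (\<chi> i. if i = m \<or> i = n then a $ n else 0) ` ?h ` (+) ?v ` (cbox a b)"
        using \<open>m \<noteq> n\<close> unfolding image_comp o_def by (force simp: vec_eq_iff)
      then have "measure lebesgue (?h ` (cbox a b))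
               = measure lebesgue ((\<lambda>v. \<chi> i. if i = m then v $ m + v $ n else v $ i) `
                                   (+) ?v ` cbox a b)"
        by (rule ssubst) (rule measure_translation)
      also have "\<dots> = measure lebesgue ((\<lambda>v. \<chi> i. if i = m then v $ m + v $ n else v $ i) ` cbox (?v +a) (?v + b))"
        by (metis (no_types, lifting) cbox_translation)
      also have "\<dots> = measure lebesgue ((+) ?v ` cbox a b)"
        apply (subst measure_shear_interval)
        using \<open>m \<noteq> n\<close> ne apply auto
        apply (simp add: cbox_translation)
        by (metis cbox_borel cbox_translation measure_completion sets_lborel)
      also have "\<dots> = measure lebesgue (cbox a b)"
        by (rule measure_translation)
        finally show ?thesis .
      qed
    show "?h ` S \<in> lmeasurable \<and> ?Q ?h S"
      using measure_linear_sufficient [OF lin \<open>S \<in> lmeasurable\<close>] meq 1 by force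
  qed
  with assms show "(f ` S) \<in> lmeasurable" "?Q f S"
    by metis+
qed


lemma ellipsoid_image: "ellipsoid A h = (\<lambda>u. A *v u + h) ` cball 0 1"
  unfolding ellipsoid_def by (auto simp: dist_norm)

lemma ellipsoid_compact: "compact (ellipsoid (A::real^'r::finite^'r) h)"
  unfolding ellipsoid_image
  by (intro compact_continuous_image compact_cball continuous_intros)


lemma measure_ellipsoid:
  fixes A :: "real^'r::finite^'r"
  shows "emeasure lborel (ellipsoid A h) = ennreal (\<bar>det A\<bar> * measure lborel (cball (0::real^'r) 1))"
proof -
  have e: "ellipsoid A h = (+) h ` ((*v) A ` cball 0 1)"
    unfolding ellipsoid_image by (auto simp: image_image add.commute)
  have lin: "linear ((*v) A)" by (simp add: matrix_vector_mul_linear)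
  have m1: "measure lebesgue ((*v) A ` cball 0 1) = \<bar>det A\<bar> * measure lebesgue (cball (0::real^'r) 1)"
    using measure_linear_image_gen[OF lin lmeasurable_cball] by simp
  have m2: "measure lebesgue (ellipsoid A h) = \<bar>det A\<bar> * measure lebesgue (cball (0::real^'r) 1)"
    unfolding e measure_translation m1 ..
  have c: "compact (ellipsoid A h)" by (rule ellipsoid_compact)
  have "emeasure lborel (ellipsoid A h) = ennreal (measure lborel (ellipsoid A h))"
    using emeasure_compact_finite[OF c] by (simp add: emeasure_eq_ennreal_measure)
  also have "measure lborel (ellipsoid A h) = measure lebesgue (ellipsoid A h)"
    using c by (simp add: borel_compact)
  finally show ?thesis using m2 by simp
qed

lemma vball_pos: "measure lborel (cball (0::real^'r::finite) 1) > 0"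
  using content_cball_pos[of 1 "0::real^'r"] by simp


definition diagm :: "real^'n::finite \<Rightarrow> real^'n^'n" where
  "diagm d = (\<chi> i j. if i = j then d$i else 0)"

lemma inner_mat_transpose:
  fixes A :: "real^'n::finite^'m::finite"
  shows "x \<bullet> (A *v y) = (transpose A *v x) \<bullet> y"
  by (metis dot_lmul_matrix inner_commute vector_transpose_matrix)

lemma inner_mat_sym:
  fixes A :: "real^'n::finite^'n"
  assumes "transpose A = A"
  shows "x \<bullet> (A *v y) = (A *v x) \<bullet> y"
  using inner_mat_transpose[of x A y] assms by simp

lemma quad_zero_lemma:
  fixes a b :: real
  assumes "\<And>t. 2*t*a + t^2*b \<le> 0"
  shows "a = 0"
proof (rule ccontr)
  assume "a \<noteq> 0"
  define c where "c = \<bar>b\<bar>+1"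
  define t where "t = a / c"
  have pos: "c > 0" by (simp add: c_def add_nonneg_pos)
  have e1: "2*t*a = 2*a^2*c / c^2"
    unfolding t_def using pos by (simp add: field_simps power2_eq_square)
  have e2: "t^2*b = a^2*b / c^2"
    unfolding t_def using pos by (simp add: field_simps power2_eq_square)
  have "2*t*a + t^2*b = a^2 * (2*c + b) / c^2"
    unfolding e1 e2 by (simp add: add_divide_distrib[symmetric] algebra_simps)
  moreover have "a^2 * (2*c + b) / c^2 > 0"
  proof (intro divide_pos_pos mult_pos_pos)
    show "0 < a^2" using \<open>a \<noteq> 0\<close> by simp
    show "0 < 2*c + b" unfolding c_def by (cases "b \<ge> 0") auto
    show "0 < c^2" using pos by simp
  qed
  ultimately show False using assms[of t] by linarith
qed

lemma max_quad_eig: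
  fixes A :: "real^'n::finite^'n"
  assumes sym: "transpose A = A"
    and Seig: "\<And>w. w \<in> S \<Longrightarrow> A *v w = (w \<bullet> (A *v w)) *\<^sub>R w"
    and vV: "\<forall>w\<in>S. w \<bullet> v = 0" and nv: "norm v = 1"
    and vmax: "\<And>y. (\<forall>w\<in>S. w \<bullet> y = 0) \<Longrightarrow> norm y = 1 \<Longrightarrow> y \<bullet> (A *v y) \<le> v \<bullet> (A *v v)"
  shows "A *v v = (v \<bullet> (A *v v)) *\<^sub>R v"
proof -
  define l where "l = v \<bullet> (A *v v)"
  define z where "z = A *v v - l *\<^sub>R v"
  have vv: "v \<bullet> v = 1" using nv by (simp add: dot_square_norm)
  have key: "y \<bullet> (A *v v) = 0" if yV: "\<forall>w\<in>S. w \<bullet> y = 0" and yv: "y \<bullet> v = 0" for y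
  proof -
    have "2*t*(y \<bullet> (A *v v)) + t^2*(y \<bullet> (A *v y) - l * (y \<bullet> y)) \<le> 0" for t
    proof -
      define x where "x = v + t *\<^sub>R y"
      have xV: "\<forall>w\<in>S. w \<bullet> x = 0" using vV yV by (simp add: x_def inner_add_right)
      have xx: "x \<bullet> x = 1 + t^2 * (y \<bullet> y)"
        using vv yv by (simp add: x_def inner_add_left inner_add_right inner_commute power2_eq_square)
      have xpos: "x \<bullet> x > 0" unfolding xx by (simp add: add_pos_nonneg)
      then have nx: "norm x > 0" by (simp add: dot_square_norm)
      define x' where "x' = (1/norm x) *\<^sub>R x"
      have "norm x' = 1" using nx by (simp add: x'_def)
      moreover have "\<forall>w\<in>S. w \<bullet> x' = 0" using xV by (simp add: x'_def)
      ultimately have "x' \<bullet> (A *v x') \<le> l" using vmax l_def by blast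
      moreover have "x' \<bullet> (A *v x') = (x \<bullet> (A *v x)) / (x \<bullet> x)"
        using nx by (simp add: x'_def matrix_vector_mult_scaleR dot_square_norm power2_eq_square)
      ultimately have "x \<bullet> (A *v x) \<le> l * (x \<bullet> x)"
        using xpos by (simp add: divide_le_eq)
      moreover have "x \<bullet> (A *v x) = l + 2*t*(y \<bullet> (A *v v)) + t^2 * (y \<bullet> (A *v y))"
      proof -
        have "v \<bullet> (A *v y) = y \<bullet> (A *v v)"
          using inner_mat_sym[OF sym, of v y] by (simp add: inner_commute)
        then show ?thesis
          by (simp add: x_def l_def matrix_vector_right_distrib matrix_vector_mult_scaleR
              inner_add_left inner_add_right power2_eq_square algebra_simps)
      qed
      ultimately show ?thesis unfolding xx by (simp add: algebra_simps)
    qed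
    then show ?thesis by (rule quad_zero_lemma)
  qed
  have zS: "\<forall>w\<in>S. w \<bullet> z = 0"
  proof
    fix w assume w: "w \<in> S"
    have "w \<bullet> (A *v v) = (A *v w) \<bullet> v" by (rule inner_mat_sym[OF sym])
    also have "\<dots> = (w \<bullet> (A *v w)) * (w \<bullet> v)" by (subst Seig[OF w]) simp
    also have "\<dots> = 0" using vV w by simp
    finally show "w \<bullet> z = 0" using vV w by (simp add: z_def inner_diff_right)
  qed
  have "v \<bullet> z = 0" using vv by (simp add: z_def l_def inner_diff_right)
  then have zv: "z \<bullet> v = 0" by (simp add: inner_commute)
  have "z \<bullet> (A *v v) = 0" by (rule key[OF zS zv])
  then have "z \<bullet> z = 0" using zv by (simp add: z_def inner_diff_left inner_diff_right inner_commute)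
  then have "z = 0" by simp
  then show ?thesis by (simp add: z_def l_def)
qed


lemma spectral_sets:
  fixes A :: "real^'n::finite^'n"
  assumes sym: "transpose A = A"
  shows "k \<le> CARD('n) \<Longrightarrow> \<exists>S. finite S \<and> card S = k \<and> pairwise orthogonal S \<and>
           (\<forall>v\<in>S. norm v = 1 \<and> A *v v = (v \<bullet> (A *v v)) *\<^sub>R v)"
proof (induction k)
  case 0
  then show ?case by (intro exI[of _ "{}"]) auto
next
  case (Suc k)
  then obtain S where S: "finite S" "card S = k" "pairwise orthogonal S"
    "\<forall>v\<in>S. norm v = 1 \<and> A *v v = (v \<bullet> (A *v v)) *\<^sub>R v" by auto
  have "dim S \<le> card S" using dim_le_card[of S S] S(1) span_superset by blast
  then have "dim S < DIM(real^'n)" using Suc.prems S(2) by simp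
  then obtain x where x: "x \<noteq> 0" "\<And>y. y \<in> span S \<Longrightarrow> orthogonal x y"
    using orthogonal_to_subspace_exists[of S] by blast
  define V where "V = {y::real^'n. \<forall>w\<in>S. w \<bullet> y = 0}"
  define K where "K = V \<inter> sphere 0 1"
  have "closed V"
  proof -
    have "V = (\<Inter>w\<in>S. {y. w \<bullet> y = 0})" by (auto simp: V_def)
    then show ?thesis by (simp add: closed_INT closed_hyperplane)
  qed
  then have cK: "compact K" unfolding K_def by (simp add: closed_Int_compact)
  define x' where "x' = (1/norm x) *\<^sub>R x"
  have "x' \<in> K"
    using x span_superset unfolding K_def V_def x'_def
    by (auto simp: orthogonal_def inner_commute)
  then have neK: "K \<noteq> {}" by auto
  have "continuous_on K (\<lambda>y. y \<bullet> (A *v y))"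
    by (intro continuous_intros continuous_on_id linear_continuous_on matrix_vector_mul_bounded_linear)
  then obtain v where v: "v \<in> K" and vmax: "\<And>y. y \<in> K \<Longrightarrow> y \<bullet> (A *v y) \<le> v \<bullet> (A *v v)"
    using continuous_attains_sup[OF cK neK] by blast
  have eig: "A *v v = (v \<bullet> (A *v v)) *\<^sub>R v"
  proof (rule max_quad_eig[OF sym, of S])
    show "\<And>w. w \<in> S \<Longrightarrow> A *v w = (w \<bullet> (A *v w)) *\<^sub>R w" using S(4) by blast
    show "\<forall>w\<in>S. w \<bullet> v = 0" using v by (simp add: K_def V_def)
    show "norm v = 1" using v by (simp add: K_def)
    show "\<And>y. \<forall>w\<in>S. w \<bullet> y = 0 \<Longrightarrow> norm y = 1 \<Longrightarrow> y \<bullet> (A *v y) \<le> v \<bullet> (A *v v)"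
      using vmax by (simp add: K_def V_def)
  qed
  have vS: "v \<notin> S"
  proof
    assume "v \<in> S"
    then have "v \<bullet> v = 0" using v by (simp add: K_def V_def)
    then show False using v by (simp add: K_def)
  qed
  show ?case
  proof (intro exI[of _ "insert v S"] conjI)
    show "finite (insert v S)" using S(1) by simp
    show "card (insert v S) = Suc k" using S vS by simp
    show "pairwise orthogonal (insert v S)"
      using S(3) v unfolding pairwise_insert
      by (auto simp: K_def V_def orthogonal_def inner_commute)
    show "\<forall>w\<in>insert v S. norm w = 1 \<and> A *v w = (w \<bullet> (A *v w)) *\<^sub>R w"
      using S(4) v eig by (auto simp: K_def)
  qed
qed

lemma spectral:
  fixes A :: "real^'n::finite^'n"
  assumes sym: "transpose A = A"
  obtains U d where "orthogonal_matrix U" "A = U ** diagm d ** transpose U"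
    "\<And>i. d$i = column i U \<bullet> (A *v column i U)"
    "\<And>i. A *v column i U = d$i *\<^sub>R column i U"
proof -
  obtain S where S: "finite S" "card S = CARD('n)" "pairwise orthogonal S"
    "\<forall>v\<in>S. norm v = 1 \<and> A *v v = (v \<bullet> (A *v v)) *\<^sub>R v"
    using spectral_sets[OF sym, of "CARD('n)"] by auto
  obtain f where f: "bij_betw f (UNIV::'n set) S"
    using finite_same_card_bij[of "UNIV::'n set" S] S by auto
  define U :: "real^'n^'n" where "U = (\<chi> i j. (f j) $ i)"
  define d :: "real^'n" where "d = (\<chi> j. f j \<bullet> (A *v f j))"
  have colU: "column j U = f j" for j by (simp add: U_def column_def vec_eq_iff)
  have fS: "f j \<in> S" for j using f by (auto simp: bij_betw_def)
  have finj: "f i = f j \<Longrightarrow> i = j" for i j using f by (auto simp: bij_betw_def inj_def)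
  have "transpose U ** U = mat 1"
  proof -
    have "(transpose U ** U) $ i $ j = mat 1 $ i $ j" for i j
    proof -
      have "(transpose U ** U) $ i $ j = f i \<bullet> f j"
        by (simp add: matrix_matrix_mult_def transpose_def U_def inner_vec_def)
      also have "\<dots> = mat 1 $ i $ j"
      proof (cases "i = j")
        case True
        then show ?thesis using S(4) fS[of i] by (simp add: mat_def dot_square_norm)
      next
        case False
        then have "f i \<noteq> f j" using finj by blast
        then show ?thesis using S(3) fS[of i] fS[of j] False
          by (auto simp: mat_def pairwise_def orthogonal_def)
      qed
      finally show ?thesis .
    qed
    then show ?thesis by (simp add: vec_eq_iff)
  qed
  then have oU: "orthogonal_matrix U" by (simp add: orthogonal_matrix)
  have eigs: "A *v column i U = d$i *\<^sub>R column i U" for i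
    using S(4) fS[of i] by (simp add: colU d_def)
  have "A ** U = U ** diagm d"
  proof -
    have "(A ** U) $ i $ j = (U ** diagm d) $ i $ j" for i j
    proof -
      have "(A ** U) $ i $ j = (A *v column j U) $ i"
        by (simp add: matrix_matrix_mult_def matrix_vector_mult_def column_def)
      also have "\<dots> = d$j * U$i$j" using eigs[of j] by (simp add: column_def)
      also have "\<dots> = (U ** diagm d) $ i $ j"
        by (simp add: matrix_matrix_mult_def diagm_def if_distrib[of "\<lambda>x. _ * x"] cong: if_cong)
      finally show ?thesis .
    qed
    then show ?thesis by (simp add: vec_eq_iff)
  qed
  then have "A = U ** diagm d ** transpose U"
    using oU unfolding orthogonal_matrix_def
    by (metis matrix_mul_assoc matrix_mul_rid)
  moreover have "d$i = column i U \<bullet> (A *v column i U)" for i by (simp add: d_def colU)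
  ultimately show ?thesis using that oU eigs by blast
qed

lemma det_diagm: "det (diagm d) = prod (\<lambda>i. d$i) UNIV"
  by (subst det_diagonal) (auto simp: diagm_def)

lemma det_spectral:
  fixes U :: "real^'n::finite^'n"
  assumes "orthogonal_matrix U"
  shows "det (U ** diagm d ** transpose U) = prod (\<lambda>i. d$i) UNIV"
proof -
  have "det U * det U = 1"
    using assms unfolding orthogonal_matrix_def
    by (metis det_I det_mul det_transpose)
  then show ?thesis by (simp add: det_mul det_transpose det_diagm)
qed


lemma inv_ex:
  fixes M :: "real^'n::finite^'n"
  assumes "det M \<noteq> 0"
  obtains Mi where "M ** Mi = mat 1" "Mi ** M = mat 1"
  using assms invertible_det_nz[of M] unfolding invertible_def by blast

lemma diagm_mult: "diagm a ** diagm b = diagm (\<chi> i. a$i * b$i)"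
  by (simp add: diagm_def matrix_matrix_mult_def vec_eq_iff if_distrib[of "\<lambda>x. x * _"] cong: if_cong)

lemma transpose_diagm: "transpose (diagm d) = diagm d"
  by (simp add: diagm_def transpose_def vec_eq_iff)

lemma diagm_mv: "diagm d *v y = (\<chi> i. d$i * y$i)"
  by (simp add: diagm_def matrix_vector_mult_def vec_eq_iff if_distrib[of "\<lambda>x. x * _"] cong: if_cong)

lemma quad_spectral:
  fixes U :: "real^'n::finite^'n"
  shows "x \<bullet> ((U ** diagm d ** transpose U) *v x) = (\<Sum>i\<in>UNIV. d$i * ((transpose U *v x)$i)^2)"
proof -
  define y where "y = transpose U *v x"
  have "x \<bullet> ((U ** diagm d ** transpose U) *v x) = x \<bullet> (U *v (diagm d *v y))"
    by (simp add: y_def matrix_vector_mul_assoc matrix_mul_assoc del: transpose_matrix_vector)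
  also have "\<dots> = y \<bullet> (diagm d *v y)"
    using inner_mat_transpose[of x U "diagm d *v y"] by (simp add: y_def del: transpose_matrix_vector)
  also have "\<dots> = (\<Sum>i\<in>UNIV. d$i * (y$i)^2)"
    by (simp add: diagm_mv inner_vec_def power2_eq_square mult_ac)
  finally show ?thesis by (simp add: y_def del: transpose_matrix_vector)
qed

lemma orth_col_norm:
  fixes U :: "real^'n::finite^'n"
  assumes "orthogonal_matrix U"
  shows "column i U \<bullet> column i U = 1"
proof -
  have "(transpose U ** U) $ i $ i = 1" using assms by (simp add: orthogonal_matrix mat_def)
  then show ?thesis
    by (simp add: matrix_matrix_mult_def transpose_def inner_vec_def column_def)
qed

lemma orth_col_nz:
  fixes U :: "real^'n::finite^'n"
  assumes "orthogonal_matrix U"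
  shows "column i U \<noteq> 0"
  using orth_col_norm[OF assms, of i] by auto

lemma ellipsoid_orth:
  fixes R Ob :: "real^'n::finite^'n"
  assumes "orthogonal_matrix Ob"
  shows "ellipsoid (R ** Ob) h = ellipsoid R h"
proof -
  have ot: "orthogonal_transformation ((*v) Ob)"
    using assms by (simp add: orthogonal_transformation_matrix matrix_vector_mul_linear)
  have "(*v) Ob ` cball 0 1 = cball 0 1"
    using image_orthogonal_transformation_cball[OF ot, of 0 1] by simp
  moreover have "(\<lambda>u. R *v u + h) ` ((*v) Ob ` cball 0 1) = ellipsoid (R ** Ob) h"
    unfolding ellipsoid_image image_image by (simp add: matrix_vector_mul_assoc)
  ultimately show ?thesis by (simp add: ellipsoid_image)
qed

lemma symm_psd_spectral:
  fixes U :: "real^'n::finite^'n"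
  assumes "orthogonal_matrix U" "\<And>i. d$i \<ge> 0"
  shows "psd (U ** diagm d ** transpose U)"
proof -
  have "transpose (U ** diagm d ** transpose U) = U ** diagm d ** transpose U"
    by (simp add: matrix_transpose_mul transpose_diagm matrix_mul_assoc)
  moreover have "0 \<le> x \<bullet> ((U ** diagm d ** transpose U) *v x)" for x
    unfolding quad_spectral using assms(2) by (intro sum_nonneg mult_nonneg_nonneg) auto
  ultimately show ?thesis by (simp add: psd_def)
qed

lemma psd_rep:
  fixes M :: "real^'n::finite^'n"
  assumes dM: "det M \<noteq> 0"
  obtains R where "psd R" "det R = \<bar>det M\<bar>" "R ** R = M ** transpose M"
    "\<And>h. ellipsoid M h = ellipsoid R h"
proof -
  define G where "G = M ** transpose M"
  have symG: "transpose G = G" by (simp add: G_def matrix_transpose_mul)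
  obtain U mu where oU: "orthogonal_matrix U" and Gdec: "G = U ** diagm mu ** transpose U"
    and mu: "\<And>i. mu$i = column i U \<bullet> (G *v column i U)"
    and "\<And>i. G *v column i U = mu$i *\<^sub>R column i U"
    by (rule spectral[OF symG]) blast
  obtain Mi where Mi: "M ** Mi = mat 1" "Mi ** M = mat 1" using inv_ex[OF dM] by blast
  have mupos: "mu$i > 0" for i
  proof -
    define c where "c = column i U"
    have "c \<noteq> 0" using orth_col_nz[OF oU] by (simp add: c_def)
    have "mu$i = (transpose M *v c) \<bullet> (transpose M *v c)"
      using mu[of i] inner_mat_transpose[of c M "transpose M *v c"]
      by (simp add: G_def c_def matrix_vector_mul_assoc[symmetric] del: transpose_matrix_vector)
    moreover have "transpose M *v c \<noteq> 0"
    proof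
      assume "transpose M *v c = 0"
      then have "transpose Mi *v (transpose M *v c) = 0" by simp
      moreover have "transpose Mi ** transpose M = mat 1"
        using Mi(1) matrix_transpose_mul[of M Mi] by simp
      ultimately show False using \<open>c \<noteq> 0\<close>
        by (simp add: matrix_vector_mul_assoc del: transpose_matrix_vector)
    qed
    ultimately show ?thesis by simp
  qed
  define s where "s = (\<chi> i. sqrt (mu$i))"
  define R where "R = U ** diagm s ** transpose U"
  have psdR: "psd R" unfolding R_def by (rule symm_psd_spectral[OF oU]) (use mupos in \<open>simp add: s_def less_imp_le\<close>)
  have UtU: "transpose U ** U = mat 1" using oU by (simp add: orthogonal_matrix_def)
  have RR: "R ** R = G"
  proof -
    have "R ** R = U ** (diagm s ** (transpose U ** U) ** diagm s) ** transpose U"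
      by (simp add: R_def matrix_mul_assoc)
    also have "\<dots> = U ** diagm mu ** transpose U"
      using mupos by (simp add: UtU diagm_mult s_def vec_eq_iff less_imp_le)
    finally show ?thesis using Gdec by simp
  qed
  have detR0: "det R \<ge> 0"
    unfolding R_def det_spectral[OF oU] s_def using mupos by (simp add: prod_nonneg less_imp_le)
  have "det R * det R = det (R ** R)" by (simp add: det_mul)
  also have "\<dots> = det M * det M" unfolding RR G_def by (simp add: det_mul det_transpose)
  finally have "det R * det R = det M * det M" .
  then have "sqrt ((det R)^2) = sqrt ((det M)^2)" by (simp add: power2_eq_square)
  then have "\<bar>det R\<bar> = \<bar>det M\<bar>" by simp
  then have dR: "det R = \<bar>det M\<bar>" using detR0 by simp
  have "det R \<noteq> 0" using dR dM by simp
  obtain Ri where Ri: "R ** Ri = mat 1" "Ri ** R = mat 1" using inv_ex[OF \<open>det R \<noteq> 0\<close>] by blast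
  have symR: "transpose R = R" using psdR by (simp add: psd_def)
  define Ob where "Ob = Ri ** M"
  have "Ob ** transpose Ob = Ri ** (R ** R) ** transpose Ri"
    by (simp add: Ob_def RR G_def matrix_transpose_mul matrix_mul_assoc)
  also have "\<dots> = R ** transpose Ri" using Ri(2) by (simp add: matrix_mul_assoc)
  also have "\<dots> = transpose (Ri ** R)" using symR by (simp add: matrix_transpose_mul)
  also have "\<dots> = mat 1" using Ri(2) by simp
  finally have "Ob ** transpose Ob = mat 1" .
  then have oO: "orthogonal_matrix Ob"
    by (simp add: orthogonal_matrix_def matrix_left_right_inverse)
  have "M = R ** Ob" using Ri(1) by (simp add: Ob_def matrix_mul_assoc)
  then have "ellipsoid M h = ellipsoid R h" for h using ellipsoid_orth[OF oO] by simp
  then show ?thesis using that psdR dR RR G_def by blast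
qed

lemma det_pos_definite:
  fixes A :: "real^'n::finite^'n"
  assumes "transpose A = A" "\<And>x. x \<noteq> 0 \<Longrightarrow> x \<bullet> (A *v x) > 0"
  shows "det A > 0"
proof -
  obtain U d where oU: "orthogonal_matrix U" and Adec: "A = U ** diagm d ** transpose U"
    and d: "\<And>i. d$i = column i U \<bullet> (A *v column i U)"
    and "\<And>i. A *v column i U = d$i *\<^sub>R column i U"
    by (rule spectral[OF assms(1)]) blast
  have "d$i > 0" for i using d[of i] assms(2)[OF orth_col_nz[OF oU, of i]] by simp
  then show ?thesis using Adec det_spectral[OF oU] by (simp add: prod_pos)
qed


lemma ellipsoidI: "norm u \<le> 1 \<Longrightarrow> A *v u + h \<in> ellipsoid A h"
  unfolding ellipsoid_def by blast

lemma ellipsoidE: "x \<in> ellipsoid A h \<Longrightarrow> (\<And>u. norm u \<le> 1 \<Longrightarrow> x = A *v u + h \<Longrightarrow> thesis) \<Longrightarrow> thesis"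
  unfolding ellipsoid_def by blast

lemma amgm_all_one:
  fixes rho :: "'n::finite \<Rightarrow> real"
  assumes nn: "\<And>i. rho i \<ge> 0" and p1: "prod rho UNIV \<ge> 1"
    and p2: "prod (\<lambda>i. (1 + rho i)/2) UNIV \<le> 1"
  shows "rho i = 1"
proof (rule ccontr)
  assume ne: "rho i \<noteq> 1"
  have pos: "rho j > 0" for j
  proof (rule ccontr)
    assume "\<not> rho j > 0"
    then have "rho j = 0" using nn[of j] by simp
    then have "prod rho UNIV = 0" by (intro prod_zero) auto
    then show False using p1 by linarith
  qed
  define a where "a j = ((1 + rho j)/2)^2" for j
  have age: "a j \<ge> rho j" for j
  proof -
    have "a j - rho j = ((1 - rho j)/2)^2" by (simp add: a_def power2_eq_square field_simps)
    then show ?thesis by (metis diff_ge_0_iff_ge zero_le_power2)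
  qed
  have agt: "a i > rho i"
  proof -
    have "a i - rho i = ((1 - rho i)/2)^2" by (simp add: a_def power2_eq_square field_simps)
    moreover have "((1 - rho i)/2)^2 > 0" using ne by simp
    ultimately show ?thesis by linarith
  qed
  have "prod a UNIV = (prod (\<lambda>i. (1 + rho i)/2) UNIV)^2"
    by (simp add: a_def prod_power_distrib)
  also have "\<dots> \<le> 1"
  proof -
    have "0 \<le> prod (\<lambda>i. (1 + rho i)/2) UNIV" using nn by (intro prod_nonneg) (simp add: add_nonneg_nonneg)
    then show ?thesis using p2 by (simp add: power_le_one)
  qed
  finally have pa: "prod a UNIV \<le> 1" .
  have "prod rho UNIV = rho i * prod rho (UNIV - {i})" by (simp add: prod.remove)
  also have "\<dots> < a i * prod rho (UNIV - {i})"
    using agt pos by (intro mult_strict_right_mono prod_pos) auto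
  also have "\<dots> \<le> a i * prod a (UNIV - {i})"
    using age nn pos agt order_trans[OF nn age] by (intro mult_left_mono prod_mono) auto
  also have "\<dots> = prod a UNIV" by (simp add: prod.remove)
  finally show False using p1 pa by simp
qed

lemma norm_unique:
  fixes M :: "real^'n::finite^'n"
  assumes cvx: "convex Q"
    and mx: "\<And>A h. det A \<noteq> 0 \<Longrightarrow> ellipsoid A h \<subseteq> Q \<Longrightarrow> \<bar>det A\<bar> \<le> 1"
    and B: "cball 0 1 \<subseteq> Q"
    and EM: "ellipsoid M k \<subseteq> Q" and dM: "\<bar>det M\<bar> \<ge> 1"
  shows "M ** transpose M = mat 1 \<and> k = 0"
proof -
  have dM0: "det M \<noteq> 0" using dM by auto
  obtain R where psdR: "psd R" and dR: "det R = \<bar>det M\<bar>" and RR: "R ** R = M ** transpose M"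
    and ER: "\<And>h. ellipsoid M h = ellipsoid R h"
    by (rule psd_rep[OF dM0]) blast
  have symR: "transpose R = R" using psdR by (simp add: psd_def)
  obtain U rho where oU: "orthogonal_matrix U" and Rdec: "R = U ** diagm rho ** transpose U"
    and rho: "\<And>i. rho$i = column i U \<bullet> (R *v column i U)"
    and "\<And>i. R *v column i U = rho$i *\<^sub>R column i U"
    by (rule spectral[OF symR]) blast
  have rho0: "rho$i \<ge> 0" for i using rho[of i] psdR by (simp add: psd_def)
  have prho: "prod (\<lambda>i. rho$i) UNIV \<ge> 1"
    using dR dM Rdec det_spectral[OF oU, of rho] by simp
  have UUt: "U ** transpose U = mat 1" using oU by (simp add: orthogonal_matrix_def)
  define e where "e = (\<chi> i. (1 + rho$i)/2)"
  define N where "N = U ** diagm e ** transpose U"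
  have Nu: "N *v u = (1/2) *\<^sub>R u + (1/2) *\<^sub>R (R *v u)" for u
  proof -
    define y where "y = transpose U *v u"
    have "N *v u = U *v (diagm e *v y)"
      by (simp add: N_def y_def matrix_vector_mul_assoc matrix_mul_assoc del: transpose_matrix_vector)
    also have "diagm e *v y = (1/2) *\<^sub>R y + (1/2) *\<^sub>R (diagm rho *v y)"
      by (simp add: diagm_mv e_def vec_eq_iff field_simps)
    also have "U *v ((1/2) *\<^sub>R y + (1/2) *\<^sub>R (diagm rho *v y))
        = (1/2) *\<^sub>R (U *v y) + (1/2) *\<^sub>R (U *v (diagm rho *v y))"
      by (simp add: matrix_vector_right_distrib matrix_vector_mult_scaleR)
    also have "U *v y = u"
      by (simp add: y_def matrix_vector_mul_assoc UUt del: transpose_matrix_vector)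
    also have "U *v (diagm rho *v y) = R *v u"
      by (simp add: y_def Rdec matrix_vector_mul_assoc matrix_mul_assoc del: transpose_matrix_vector)
    finally show ?thesis .
  qed
  have EN: "ellipsoid N ((1/2) *\<^sub>R k) \<subseteq> Q"
  proof
    fix x assume "x \<in> ellipsoid N ((1/2) *\<^sub>R k)"
    then obtain u where u: "norm u \<le> 1" "x = N *v u + (1/2) *\<^sub>R k" by (rule ellipsoidE)
    have "x = (1/2) *\<^sub>R u + (1/2) *\<^sub>R (R *v u + k)"
      using u(2) by (simp add: Nu scaleR_right_distrib)
    moreover have "u \<in> Q" using B u(1) by auto
    moreover have "R *v u + k \<in> Q" using EM ER[of k] ellipsoidI[OF u(1), of R k] by auto
    ultimately show "x \<in> Q" using convexD[OF cvx, of u "R *v u + k" "1/2" "1/2"] by simp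
  qed
  moreover have dN: "det N = prod (\<lambda>i. (1 + rho$i)/2) UNIV"
    unfolding N_def det_spectral[OF oU] by (simp add: e_def)
  moreover have "prod (\<lambda>i. (1 + rho$i)/2) UNIV > 0"
  proof (intro prod_pos)
    fix i show "0 < (1 + rho$i)/2" using rho0[of i] by simp
  qed
  ultimately have "det N > 0" by simp
  then have "det N \<noteq> 0" by simp
  from mx[OF this EN] \<open>det N > 0\<close> have "prod (\<lambda>i. (1 + rho$i)/2) UNIV \<le> 1"
    using dN by simp
  then have r1: "rho$i = 1" for i
    using amgm_all_one[of "\<lambda>i. rho$i"] rho0 prho by blast
  have "diagm rho = mat 1" using r1 by (simp add: diagm_def mat_def vec_eq_iff)
  then have R1: "R = mat 1" using Rdec UUt by simp
  have MM: "M ** transpose M = mat 1" using RR R1 by simp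
  have EI: "ellipsoid (mat 1) k \<subseteq> Q" using EM ER[of k] R1 by simp
  have "k = 0"
  proof (rule ccontr)
    assume k0: "k \<noteq> 0"
    define w where "w = (1 / norm k) *\<^sub>R k"
    define c where "c = norm k / 2"
    have nw: "norm w = 1" using k0 by (simp add: w_def)
    have c0: "c > 0" using k0 by (simp add: c_def)
    define N2 :: "real^'n^'n" where "N2 = (\<chi> i j. mat 1 $ i $ j + c * w$i * w$j)"
    have N2eq: "N2 = mat 1 + c *\<^sub>R (\<chi> i j. w$i * w$j)"
      by (simp add: N2_def vec_eq_iff mat_def)
    have Xv: "(\<chi> i j. w$i * w$j) *v u = (w \<bullet> u) *\<^sub>R w" for u
      by (simp add: vec_eq_iff matrix_vector_mult_def inner_vec_def sum_distrib_left mult_ac)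
    have N2v: "N2 *v u = u + (c * (w \<bullet> u)) *\<^sub>R w" for u
      unfolding N2eq by (simp add: matrix_vector_mult_add_rdistrib scaleR_matrix_vector_assoc[symmetric] Xv)
    have symN2: "transpose N2 = N2"
      by (simp add: N2_def transpose_def vec_eq_iff mat_def mult_ac)
    have EN2: "ellipsoid N2 ((1/2) *\<^sub>R k) \<subseteq> Q"
    proof
      fix x assume "x \<in> ellipsoid N2 ((1/2) *\<^sub>R k)"
      then obtain u where u: "norm u \<le> 1" "x = N2 *v u + (1/2) *\<^sub>R k" by (rule ellipsoidE)
      define s where "s = (1 + w \<bullet> u)/2"
      have wu: "\<bar>w \<bullet> u\<bar> \<le> 1"
        using Cauchy_Schwarz_ineq2[of w u] nw u(1) by simp
      have s0: "0 \<le> s" "0 \<le> 1 - s" using wu by (auto simp: s_def)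
      have "(c * (w \<bullet> u)) *\<^sub>R w = ((w \<bullet> u)/2) *\<^sub>R k"
        using k0 by (simp add: c_def w_def)
      then have x1: "x = u + ((w \<bullet> u)/2) *\<^sub>R k + (1/2) *\<^sub>R k"
        using u(2) by (simp add: N2v)
      have x2: "s *\<^sub>R k = ((w \<bullet> u)/2) *\<^sub>R k + (1/2) *\<^sub>R k"
        unfolding s_def by (metis add.commute add_divide_distrib scaleR_add_left)
      have x3: "(1 - s) *\<^sub>R u + s *\<^sub>R (u + k) = u + s *\<^sub>R k"
        by (simp add: algebra_simps)
      have "x = (1 - s) *\<^sub>R u + s *\<^sub>R (u + k)"
        unfolding x3 x2 x1 by (simp add: add.assoc)
      moreover have "u \<in> Q" using B u(1) by auto
      moreover have "u + k \<in> Q" using EI ellipsoidI[OF u(1), of "mat 1" k] by auto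
      ultimately show "x \<in> Q" using convexD[OF cvx, of u "u + k" "1 - s" s] s0 by simp
    qed
    obtain U2 nu where oU2: "orthogonal_matrix U2" and N2dec: "N2 = U2 ** diagm nu ** transpose U2"
      and nu: "\<And>i. nu$i = column i U2 \<bullet> (N2 *v column i U2)"
      and "\<And>i. N2 *v column i U2 = nu$i *\<^sub>R column i U2"
      by (rule spectral[OF symN2]) blast
    have nui: "nu$i = 1 + c * (w \<bullet> column i U2)^2" for i
      using nu[of i] orth_col_norm[OF oU2, of i]
      by (simp add: N2v inner_add_right power2_eq_square inner_commute)
    have "\<exists>i. w \<bullet> column i U2 \<noteq> 0"
    proof (rule ccontr)
      assume "\<not> (\<exists>i. w \<bullet> column i U2 \<noteq> 0)"
      then have z: "\<And>i. w \<bullet> column i U2 = 0" by simp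
      have "transpose U2 *v w = 0"
        using z by (simp add: vec_eq_iff vector_matrix_mult_def inner_vec_def column_def mult_ac)
      then have "(U2 ** transpose U2) *v w = 0"
        by (simp add: matrix_vector_mul_assoc[symmetric] del: transpose_matrix_vector)
      then have "w = 0" using oU2 by (simp add: orthogonal_matrix_def)
      then show False using nw by simp
    qed
    then obtain j where j: "w \<bullet> column j U2 \<noteq> 0" by blast
    have nu1: "nu$i \<ge> 1" for i using nui[of i] c0 by simp
    have nuj: "nu$j > 1" using nui[of j] c0 j by simp
    have "det N2 = prod (\<lambda>i. nu$i) UNIV" using N2dec det_spectral[OF oU2] by simp
    also have "\<dots> = nu$j * prod (\<lambda>i. nu$i) (UNIV - {j})" by (simp add: prod.remove)
    finally have dN2: "det N2 = nu$j * prod (\<lambda>i. nu$i) (UNIV - {j})" .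
    have P1: "prod (\<lambda>i. nu$i) (UNIV - {j}) \<ge> 1" by (rule prod_ge_1) (use nu1 in auto)
    have "nu$j * 1 \<le> nu$j * prod (\<lambda>i. nu$i) (UNIV - {j})"
      by (rule mult_left_mono[OF P1]) (use nuj in linarith)
    then have gt: "det N2 > 1" using dN2 nuj by linarith
    then have "det N2 \<noteq> 0" by linarith
    from mx[OF this EN2] gt show False by linarith
  qed
  then show ?thesis using MM by simp
qed


lemma mvie_det:
  fixes C :: "real^'n::finite^'n"
  assumes "is_MVIE P C g" "psd C'" "ellipsoid C' g' \<subseteq> P"
  shows "\<bar>det C'\<bar> \<le> \<bar>det C\<bar>"
proof -
  let ?v = "measure lborel (cball (0::real^'n) 1)"
  have "emeasure lborel (ellipsoid C' g') \<le> emeasure lborel (ellipsoid C g)"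
    using assms unfolding is_MVIE_def by blast
  then have "ennreal (\<bar>det C'\<bar> * ?v) \<le> ennreal (\<bar>det C\<bar> * ?v)"
    by (simp only: measure_ellipsoid)
  then have "\<bar>det C'\<bar> * ?v \<le> \<bar>det C\<bar> * ?v"
    using vball_pos[where 'r='n] by (simp add: ennreal_le_iff)
  then show ?thesis using vball_pos[where 'r='n] by simp
qed

lemma mvie_unique:
  fixes C A :: "real^'n::finite^'n"
  assumes cvx: "convex P" and dC: "det C \<noteq> 0"
    and mx: "\<And>C' g'. psd C' \<Longrightarrow> ellipsoid C' g' \<subseteq> P \<Longrightarrow> \<bar>det C'\<bar> \<le> \<bar>det C\<bar>"
    and EC: "ellipsoid C g \<subseteq> P" and EA: "ellipsoid A h \<subseteq> P" and dA: "\<bar>det A\<bar> \<ge> \<bar>det C\<bar>"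
  shows "A ** transpose A = C ** transpose C \<and> h = g"
proof -
  obtain Ci where Ci: "C ** Ci = mat 1" "Ci ** C = mat 1" using inv_ex[OF dC] by blast
  define Q where "Q = {y. C *v y + g \<in> P}"
  have cQ: "convex Q"
    unfolding convex_def Q_def
  proof (intro ballI allI impI, simp)
    fix x y :: "real^'n" and u v :: real
    assume x: "C *v x + g \<in> P" and y: "C *v y + g \<in> P" and uv: "0 \<le> u" "0 \<le> v" "u + v = 1"
    have "C *v (u *\<^sub>R x + v *\<^sub>R y) + g = u *\<^sub>R (C *v x + g) + v *\<^sub>R (C *v y + g)"
    proof -
      have "g = u *\<^sub>R g + v *\<^sub>R g" using uv(3) by (metis scaleR_add_left scaleR_one)
      then show ?thesis
        by (simp add: matrix_vector_right_distrib matrix_vector_mult_scaleR algebra_simps)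
    qed
    then show "C *v (u *\<^sub>R x + v *\<^sub>R y) + g \<in> P"
      using convexD[OF cvx x y uv] by simp
  qed
  have mxQ: "\<bar>det A'\<bar> \<le> 1" if dA': "det A' \<noteq> 0" and EQ: "ellipsoid A' h' \<subseteq> Q" for A' h'
  proof -
    have E1: "ellipsoid (C ** A') (C *v h' + g) \<subseteq> P"
    proof
      fix x assume "x \<in> ellipsoid (C ** A') (C *v h' + g)"
      then obtain u where u: "norm u \<le> 1" "x = (C ** A') *v u + (C *v h' + g)" by (rule ellipsoidE)
      have "A' *v u + h' \<in> Q" using EQ ellipsoidI[OF u(1)] by blast
      then have "C *v (A' *v u + h') + g \<in> P" by (simp add: Q_def)
      then show "x \<in> P" using u(2)
        by (simp add: matrix_vector_right_distrib matrix_vector_mul_assoc add.assoc)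
    qed
    have "det (C ** A') \<noteq> 0" using dA' dC by (simp add: det_mul)
    then obtain R where R: "psd R" "det R = \<bar>det (C ** A')\<bar>" "\<And>h. ellipsoid (C ** A') h = ellipsoid R h"
      by (rule psd_rep) blast
    have "\<bar>det R\<bar> \<le> \<bar>det C\<bar>" using mx[OF R(1)] E1 R(3) by simp
    then have "\<bar>det C\<bar> * \<bar>det A'\<bar> \<le> \<bar>det C\<bar> * 1" using R(2) by (simp add: det_mul abs_mult)
    then show ?thesis using dC by simp
  qed
  have BQ: "cball 0 1 \<subseteq> Q"
  proof
    fix u :: "real^'n" assume "u \<in> cball 0 1"
    then have "norm u \<le> 1" by simp
    then have "C *v u + g \<in> P" using EC ellipsoidI by blast
    then show "u \<in> Q" by (simp add: Q_def)
  qed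
  define M where "M = Ci ** A"
  define k where "k = Ci *v (h - g)"
  have CM: "C ** M = A" using Ci(1) by (simp add: M_def matrix_mul_assoc)
  have Ck: "C *v k = h - g" using Ci(1) by (simp add: k_def matrix_vector_mul_assoc)
  have EMQ: "ellipsoid M k \<subseteq> Q"
  proof
    fix x assume "x \<in> ellipsoid M k"
    then obtain u where u: "norm u \<le> 1" "x = M *v u + k" by (rule ellipsoidE)
    have "C *v x + g = A *v u + h"
      using u(2) CM Ck by (simp add: matrix_vector_right_distrib matrix_vector_mul_assoc)
    then show "x \<in> Q" using subsetD[OF EA ellipsoidI[OF u(1), of A h]] by (simp add: Q_def)
  qed
  have "det C * det Ci = 1" using Ci(1) by (metis det_I det_mul)
  then have "\<bar>det M\<bar> * \<bar>det C\<bar> = \<bar>det A\<bar>"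
    by (simp add: M_def det_mul abs_mult) (metis abs_1 abs_mult mult.commute mult.left_commute mult_1)
  then have "1 * \<bar>det C\<bar> \<le> \<bar>det M\<bar> * \<bar>det C\<bar>" using dA by simp
  then have "\<bar>det M\<bar> \<ge> 1" using dC by (simp add: mult_le_cancel_right)
  then have res: "M ** transpose M = mat 1 \<and> k = 0"
    using norm_unique[OF cQ _ BQ EMQ] mxQ by blast
  have "A ** transpose A = C ** (M ** transpose M) ** transpose C"
    using CM by (metis matrix_mul_assoc matrix_transpose_mul)
  then have "A ** transpose A = C ** transpose C" using res by simp
  moreover have "h = g" using Ck res by simp
  ultimately show ?thesis by simp
qed


lemma basis_range: "(Basis::(real^'r::finite) set) = range (\<lambda>i. axis i 1)"
  by (auto simp: Basis_vec_def)

lemma inj_axis1: "inj (\<lambda>i::'r::finite. axis i (1::real))"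
  by (auto simp: inj_def axis_eq_axis)

lemma simplex_hull:
  "(simplex_B1plus :: (real^'r::finite) set) = convex hull (insert 0 (range (\<lambda>i. axis i 1)))"
proof -
  have s: "sum (\<lambda>b. x \<bullet> b) (range (\<lambda>i::'r. axis i (1::real))) = (\<Sum>i\<in>UNIV. x $ i)" for x :: "real^'r"
    by (subst sum.reindex[OF inj_axis1]) (simp add: inner_axis)
  show ?thesis
    unfolding simplex_B1plus_def std_simplex[where 'a="real^'r", unfolded basis_range] s
    by (auto simp: inner_axis)
qed

lemma simplex_convex: "convex (simplex_B1plus :: (real^'r::finite) set)"
  unfolding simplex_hull by (rule convex_convex_hull)

lemma simplex_compact: "compact (simplex_B1plus :: (real^'r::finite) set)"
  unfolding simplex_hull by (rule finite_imp_compact_convex_hull) simp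

lemma simplex_axis: "axis j 1 \<in> (simplex_B1plus :: (real^'r::finite) set)"
  unfolding simplex_hull by (rule hull_inc) simp

lemma simplex_ext_axis: "axis j 1 extreme_point_of (simplex_B1plus :: (real^'r::finite) set)"
proof -
  have "convex (simplex_B1plus :: (real^'r) set)" by (rule simplex_convex)
  show ?thesis
    unfolding extreme_point_of_def
  proof (intro conjI ballI simplex_axis notI)
    fix a b :: "real^'r"
    assume a: "a \<in> simplex_B1plus" and b: "b \<in> simplex_B1plus" and ab: "axis j 1 \<in> open_segment a b"
    then obtain u where u: "0 < u" "u < 1" "axis j 1 = (1 - u) *\<^sub>R a + u *\<^sub>R b" "a \<noteq> b"
      by (auto simp: in_segment)
    have a0: "\<forall>i. 0 \<le> a$i" "(\<Sum>i\<in>UNIV. a$i) \<le> 1" using a by (auto simp: simplex_B1plus_def)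
    have b0: "\<forall>i. 0 \<le> b$i" "(\<Sum>i\<in>UNIV. b$i) \<le> 1" using b by (auto simp: simplex_B1plus_def)
    have comp: "(if i = j then 1 else 0) = (1 - u) * a$i + u * b$i" for i
      using arg_cong[OF u(3), of "\<lambda>v. v$i"] by (simp add: axis_def)
    have aoff: "a$i = 0" "b$i = 0" if "i \<noteq> j" for i
    proof -
      have "(1 - u) * a$i + u * b$i = 0" using comp[of i] that by simp
      moreover have "(1 - u) * a$i \<ge> 0" "u * b$i \<ge> 0" using a0 b0 u by auto
      ultimately show "a$i = 0" "b$i = 0" using u by (auto simp: add_nonneg_eq_0_iff)
    qed
    have sa: "(\<Sum>i\<in>UNIV. a$i) = a$j"
      using aoff(1) by (subst sum.remove[of _ j]) (auto intro!: sum.neutral)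
    have sb: "(\<Sum>i\<in>UNIV. b$i) = b$j"
      using aoff(2) by (subst sum.remove[of _ j]) (auto intro!: sum.neutral)
    have "1 = (1 - u) * a$j + u * b$j" using comp[of j] by simp
    moreover have "a$j \<le> 1" "b$j \<le> 1" using a0(2) b0(2) sa sb by auto
    ultimately have "a$j = 1 \<and> b$j = 1"
      using u(1,2) by (smt (verit, best) mult_left_le mult_le_cancel_left1 mult_less_cancel_left)
    then have "a = b" using aoff by (metis vec_eq_iff)
    then show False using u(4) by simp
  qed
qed

lemma simplex_ext_sub:
  "x extreme_point_of (simplex_B1plus :: (real^'r::finite) set) \<Longrightarrow> x = 0 \<or> (\<exists>i. x = axis i 1)"
  unfolding simplex_hull using extreme_point_of_convex_hull by fastforce


lemma polar_INT: "polar_wrt X d = (\<Inter>y\<in>X. {x. (y - d) \<bullet> x \<le> 1})"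
  by (auto simp: polar_wrt_def inner_commute)

lemma polar_convex: "convex (polar_wrt X d)"
  unfolding polar_INT by (intro convex_INT convex_halfspace_le)

lemma polar_closed: "closed (polar_wrt X (d::real^'n::finite))"
  unfolding polar_INT by (intro closed_INT ballI closed_halfspace_le)

lemma polar_anti: "X \<subseteq> Y \<Longrightarrow> polar_wrt Y d \<subseteq> polar_wrt X d"
  by (auto simp: polar_wrt_def)

lemma polar_ellipsoid:
  fixes C :: "real^'n::finite^'n"
  assumes sym: "transpose C = C"
  shows "polar_wrt (ellipsoid C g) g = {x. norm (C *v x) \<le> 1}"
proof (intro equalityI subsetI)
  fix x assume x: "x \<in> polar_wrt (ellipsoid C g) g"
  have key: "x \<bullet> (C *v u) = (C *v x) \<bullet> u" for u
    using inner_mat_transpose[of x C u] sym by (simp del: transpose_matrix_vector)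
  show "x \<in> {x. norm (C *v x) \<le> 1}"
  proof (rule ccontr)
    assume "x \<notin> {x. norm (C *v x) \<le> 1}"
    then have n1: "norm (C *v x) > 1" by simp
    define u where "u = (1 / norm (C *v x)) *\<^sub>R (C *v x)"
    have "norm u \<le> 1" using n1 by (simp add: u_def)
    then have "C *v u + g \<in> ellipsoid C g" by (rule ellipsoidI)
    then have "x \<bullet> (C *v u + g - g) \<le> 1" using x by (auto simp: polar_wrt_def)
    then have "(C *v x) \<bullet> u \<le> 1" using key by simp
    moreover have "(C *v x) \<bullet> u = norm (C *v x)"
      using n1 by (simp add: u_def dot_square_norm power2_eq_square)
    ultimately show False using n1 by simp
  qed
next
  fix x assume "x \<in> {x. norm (C *v x) \<le> 1}"
  then have n1: "norm (C *v x) \<le> 1" by simp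
  have key: "x \<bullet> (C *v u) = (C *v x) \<bullet> u" for u
    using inner_mat_transpose[of x C u] sym by (simp del: transpose_matrix_vector)
  show "x \<in> polar_wrt (ellipsoid C g) g"
    unfolding polar_wrt_def
  proof (intro CollectI ballI)
    fix y assume "y \<in> ellipsoid C g"
    then obtain u where u: "norm u \<le> 1" "y = C *v u + g" by (rule ellipsoidE)
    have "x \<bullet> (y - g) = (C *v x) \<bullet> u" using u(2) key by simp
    also have "\<dots> \<le> norm (C *v x) * norm u" by (rule norm_cauchy_schwarz)
    also have "\<dots> \<le> 1" using n1 u(1) by (simp add: mult_le_one)
    finally show "x \<bullet> (y - g) \<le> 1" .
  qed
qed

lemma frontier_normC:
  fixes C :: "real^'n::finite^'n"
  assumes dC: "det C \<noteq> 0"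
  shows "x \<in> frontier {x. norm (C *v x) \<le> 1} \<longleftrightarrow> norm (C *v x) = 1"
proof -
  let ?S = "{x. norm (C *v x) \<le> 1}"
  have cont: "continuous_on UNIV (\<lambda>x. norm (C *v x))"
    by (intro continuous_intros linear_continuous_on matrix_vector_mul_bounded_linear)
  have cl: "closed ?S"
    using closed_Collect_le[OF cont continuous_on_const] by simp
  have op: "open {x. norm (C *v x) < 1}"
    using open_Collect_less[OF cont continuous_on_const] by simp
  have int1: "x \<in> interior ?S" if "norm (C *v x) < 1" for x
  proof -
    have "{x. norm (C *v x) < 1} \<subseteq> interior ?S"
      by (rule interior_maximal) (auto simp: op)
    then show ?thesis using that by blast
  qed
  have int2: "x \<notin> interior ?S" if n1: "norm (C *v x) = 1" for x
  proof
    assume "x \<in> interior ?S"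
    then obtain e where e: "e > 0" "ball x e \<subseteq> ?S" using mem_interior by blast
    have x0: "x \<noteq> 0" using n1 by auto
    define y where "y = (1 + e / (2 * norm x)) *\<^sub>R x"
    have "dist x y = e/2" using x0 e(1) by (simp add: y_def dist_norm algebra_simps)
    then have "y \<in> ball x e" using e by simp
    moreover have "norm (C *v y) = 1 + e / (2 * norm x)"
      using n1 x0 e by (simp add: y_def matrix_vector_mult_scaleR)
    moreover have "e / (2 * norm x) > 0" using x0 e by simp
    ultimately show False using e(2) by auto
  qed
  show ?thesis
    unfolding frontier_def closure_closed[OF cl]
    using int1 int2 by (cases "norm (C *v x) < 1") auto
qed

lemma bipolar_sep:
  fixes P :: "(real^'n::finite) set"
  assumes cvx: "convex P" and cl: "closed P" and gP: "g \<in> P" and z: "z \<notin> P"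
  shows "\<exists>a\<in>polar_wrt P g. a \<bullet> (z - g) > 1"
proof -
  obtain c b where cb: "c \<bullet> z < b" "\<forall>x\<in>P. c \<bullet> x > b"
    using separating_hyperplane_closed_point[OF cvx cl z] by blast
  define t where "t = c \<bullet> g - b"
  have t0: "t > 0" using cb(2) gP by (simp add: t_def)
  define a where "a = (1/t) *\<^sub>R (- c)"
  have "a \<in> polar_wrt P g"
    unfolding polar_wrt_def
  proof (intro CollectI ballI)
    fix x assume "x \<in> P"
    then have "c \<bullet> x > b" using cb by blast
    then have "(- c) \<bullet> (x - g) < t" by (simp add: t_def inner_diff_right)
    then have h1: "(- c) \<bullet> (x - g) \<le> 1 * t" by simp
    have h2: "((- c) \<bullet> (x - g)) / t \<le> 1" by (subst pos_divide_le_eq[OF t0]) (rule h1)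
    have eq: "a \<bullet> (x - g) = ((- c) \<bullet> (x - g)) / t" by (simp add: a_def)
    show "a \<bullet> (x - g) \<le> 1" unfolding eq by (rule h2)
  qed
  moreover have "a \<bullet> (z - g) > 1"
  proof -
    have "(- c) \<bullet> (z - g) > t" using cb(1) by (simp add: t_def inner_diff_right)
    then have h1: "1 * t < (- c) \<bullet> (z - g)" by simp
    have h2: "1 < ((- c) \<bullet> (z - g)) / t" by (subst pos_less_divide_eq[OF t0]) (rule h1)
    have eq: "a \<bullet> (z - g) = ((- c) \<bullet> (z - g)) / t" by (simp add: a_def)
    show ?thesis unfolding eq by (rule h2)
  qed
  ultimately show ?thesis by blast
qed

lemma polar_hull:
  fixes V :: "(real^'n::finite) set"
  shows "polar_wrt (convex hull V) d = {x. \<forall>v\<in>V. x \<bullet> (v - d) \<le> 1}"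
proof (intro equalityI subsetI)
  fix x assume "x \<in> polar_wrt (convex hull V) d"
  then show "x \<in> {x. \<forall>v\<in>V. x \<bullet> (v - d) \<le> 1}"
    using hull_subset[of V convex] by (auto simp: polar_wrt_def)
next
  fix x assume x: "x \<in> {x. \<forall>v\<in>V. x \<bullet> (v - d) \<le> 1}"
  have "convex hull V \<subseteq> {y. x \<bullet> y \<le> 1 + x \<bullet> d}"
    by (rule hull_minimal) (use x in \<open>auto simp: inner_diff_right convex_halfspace_le\<close>)
  then show "x \<in> polar_wrt (convex hull V) d"
    by (auto simp: polar_wrt_def inner_diff_right)
qed

lemma polar_polyhedron:
  fixes V :: "(real^'n::finite) set"
  assumes "finite V"
  shows "polyhedron (polar_wrt (convex hull V) d)"
proof -
  have "polar_wrt (convex hull V) d = \<Inter>((\<lambda>v. {x. (v - d) \<bullet> x \<le> 1}) ` V)"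
    unfolding polar_hull by (auto simp: inner_commute)
  also have "polyhedron \<dots>"
    using assms by (intro polyhedron_Inter) (auto intro: polyhedron_halfspace_le)
  finally show ?thesis .
qed

lemma maps_into:
  fixes V :: "real^'n::finite^'n" and P :: "(real^'n) set"
  assumes cvx: "convex P" and cl: "closed P" and gP: "g \<in> P" and Vg: "V *v g = g"
    and cpt: "compact (polar_wrt P g)"
    and ext: "\<And>a. a extreme_point_of (polar_wrt P g) \<Longrightarrow> (transpose V *v a) extreme_point_of (polar_wrt P g)"
    and y: "y \<in> P"
  shows "V *v y \<in> P"
proof (rule ccontr)
  assume "V *v y \<notin> P"
  then obtain a where a: "a \<in> polar_wrt P g" "a \<bullet> (V *v y - g) > 1"
    using bipolar_sep[OF cvx cl gP] by blast
  have KM: "polar_wrt P g = convex hull {x. x extreme_point_of (polar_wrt P g)}"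
    by (rule Krein_Milman_Minkowski[OF cpt polar_convex])
  have "{x. x extreme_point_of (polar_wrt P g)} \<subseteq> {x. (V *v y - g) \<bullet> x \<le> 1}"
  proof
    fix e assume "e \<in> {x. x extreme_point_of (polar_wrt P g)}"
    then have "(transpose V *v e) extreme_point_of (polar_wrt P g)" using ext by simp
    then have "(transpose V *v e) \<in> polar_wrt P g" by (simp add: extreme_point_of_def)
    then have "(transpose V *v e) \<bullet> (y - g) \<le> 1" using y by (auto simp: polar_wrt_def)
    moreover have "(transpose V *v e) \<bullet> (y - g) = e \<bullet> (V *v y - g)"
      using inner_mat_transpose[of e V "y - g"] Vg
      by (simp add: matrix_vector_mult_diff_distrib del: transpose_matrix_vector)
    ultimately show "e \<in> {x. (V *v y - g) \<bullet> x \<le> 1}" by (simp add: inner_commute)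
  qed
  then have "convex hull {x. x extreme_point_of (polar_wrt P g)} \<subseteq> {x. (V *v y - g) \<bullet> x \<le> 1}"
    by (rule hull_minimal) (rule convex_halfspace_le)
  then have "a \<in> {x. (V *v y - g) \<bullet> x \<le> 1}" using a(1) KM by blast
  then show False using a(2) by (simp add: inner_commute)
qed


lemma detC_nz:
  fixes C :: "real^'r::finite^'r"
  assumes MV: "is_MVIE (simplex_B1plus :: (real^'r) set) C g"
  shows "det C \<noteq> 0"
proof -
  define n where "n = real CARD('r)"
  have n1: "n \<ge> 1" unfolding n_def by (simp add: Suc_le_eq)
  define c0 where "c0 = 1 / (4 * n)"
  define g0 :: "real^'r" where "g0 = (\<chi> i. 1 / (2 * n))"
  define C0 :: "real^'r^'r" where "C0 = diagm (\<chi> i. c0)"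
  have c0pos: "c0 > 0" using n1 by (simp add: c0_def)
  have psd0: "psd C0"
  proof -
    have "0 \<le> x \<bullet> (C0 *v x)" for x
    proof -
      have "x \<bullet> (C0 *v x) = (\<Sum>i\<in>UNIV. c0 * (x$i)^2)"
        by (simp add: C0_def diagm_mv inner_vec_def power2_eq_square mult_ac)
      also have "\<dots> \<ge> 0" using c0pos by (intro sum_nonneg) simp
      finally show ?thesis .
    qed
    then show ?thesis by (simp add: psd_def C0_def transpose_diagm)
  qed
  have sub: "ellipsoid C0 g0 \<subseteq> simplex_B1plus"
  proof
    fix y assume "y \<in> ellipsoid C0 g0"
    then obtain u where u: "norm u \<le> 1" "y = C0 *v u + g0" by (rule ellipsoidE)
    have yi: "y $ i = c0 * u$i + 1/(2*n)" for i
      using u(2) by (simp add: C0_def diagm_mv g0_def)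
    have ui: "\<bar>u$i\<bar> \<le> 1" for i using component_le_norm_cart[of u i] u(1) by simp
    have "c0 * u$i \<ge> - c0" for i
      using ui[of i] c0pos by (simp add: abs_le_iff) (metis mult.commute mult_minus_left mult_le_cancel_left_pos neg_le_iff_le mult_1)
    moreover have "c0 \<le> 1/(2*n)" using n1 by (simp add: c0_def field_simps)
    ultimately have y0: "y$i \<ge> 0" for i using yi[of i] by (smt (verit))
    have cu: "c0 * u$i \<le> c0" for i using ui[of i] c0pos by (simp add: abs_le_iff mult_le_cancel_left1)
    have "(\<Sum>i\<in>UNIV. y$i) \<le> (\<Sum>i::'r\<in>UNIV. c0 + 1/(2*n))"
    proof (rule sum_mono)
      fix i show "y$i \<le> c0 + 1/(2*n)" using yi[of i] cu[of i] by linarith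
    qed
    also have "\<dots> = n * (c0 + 1/(2*n))" by (simp add: n_def)
    also have "\<dots> = 3/4" using n1 by (simp add: c0_def field_simps)
    finally show "y \<in> simplex_B1plus" using y0 by (simp add: simplex_B1plus_def)
  qed
  have "\<bar>det C0\<bar> \<le> \<bar>det C\<bar>" by (rule mvie_det[OF MV psd0 sub])
  moreover have "det C0 > 0" using c0pos by (simp add: C0_def det_diagm prod_pos)
  ultimately show ?thesis by auto
qed

lemma perm_from_maps:
  fixes W W0 :: "real^'r::finite^'r"
  assumes inv1: "W ** W0 = mat 1" and inv2: "W0 ** W = mat 1"
    and WP: "\<And>y. y \<in> simplex_B1plus \<Longrightarrow> W *v y \<in> simplex_B1plus"
    and W0P: "\<And>y. y \<in> simplex_B1plus \<Longrightarrow> W0 *v y \<in> simplex_B1plus"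
  shows "perm_matrix W \<and> transpose W ** W = mat 1"
proof -
  have injW: "W *v x = W *v y \<Longrightarrow> x = y" for x y
    by (metis inv2 matrix_vector_mul_assoc matrix_vector_mul_lid)
  have ext: "(W *v axis j 1) extreme_point_of (simplex_B1plus :: (real^'r) set)" for j
    unfolding extreme_point_of_def
  proof (intro conjI ballI notI)
    show "W *v axis j 1 \<in> simplex_B1plus" by (rule WP[OF simplex_axis])
  next
    fix a b :: "real^'r"
    assume a: "a \<in> simplex_B1plus" and b: "b \<in> simplex_B1plus" and s: "W *v axis j 1 \<in> open_segment a b"
    then obtain u where u: "a \<noteq> b" "0 < u" "u < 1" "W *v axis j 1 = (1 - u) *\<^sub>R a + u *\<^sub>R b"
      by (auto simp: in_segment)
    have "axis j 1 = W0 *v (W *v axis j 1)"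
      by (simp add: matrix_vector_mul_assoc inv2)
    also have "\<dots> = (1 - u) *\<^sub>R (W0 *v a) + u *\<^sub>R (W0 *v b)"
      unfolding u(4) by (simp add: matrix_vector_right_distrib matrix_vector_mult_scaleR)
    finally have e: "axis j 1 = (1 - u) *\<^sub>R (W0 *v a) + u *\<^sub>R (W0 *v b)" .
    have "W0 *v a \<noteq> W0 *v b"
    proof
      assume "W0 *v a = W0 *v b"
      then have "W *v (W0 *v a) = W *v (W0 *v b)" by simp
      then show False using u(1) by (simp add: matrix_vector_mul_assoc inv1)
    qed
    then have "axis j 1 \<in> open_segment (W0 *v a) (W0 *v b)"
      using e u(2,3) by (auto simp: in_segment)
    then show False
      using simplex_ext_axis[of j] W0P[OF a] W0P[OF b] unfolding extreme_point_of_def by blast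
  qed
  have "\<exists>i. W *v axis j 1 = axis i 1" for j
  proof -
    have "W *v axis j 1 \<noteq> 0"
    proof
      assume "W *v axis j 1 = 0"
      then have "W *v axis j 1 = W *v 0" by simp
      then have "axis j (1::real) = 0" by (rule injW)
      then show False by (simp add: axis_eq_0_iff)
    qed
    then show ?thesis using simplex_ext_sub[OF ext[of j]] by blast
  qed
  then obtain p where p: "\<And>j. W *v axis j 1 = axis (p j) 1" by metis
  have injp: "inj p"
  proof (rule injI)
    fix i j assume "p i = p j"
    then have "W *v axis i 1 = W *v axis j 1" using p by simp
    then have "axis i (1::real) = axis j 1" by (rule injW)
    then show "i = j" by (simp add: axis_eq_axis)
  qed
  have bp: "bij p" using injp finite_UNIV_inj_surj[of p] by (simp add: bij_def)
  then have pp: "p permutes UNIV" using bij_imp_permutes[of p UNIV] by simp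
  have Wij: "W $ i $ j = (if p j = i then 1 else 0)" for i j
  proof -
    have "W $ i $ j = (W *v axis j 1) $ i"
      by (simp add: matrix_vector_mult_basis column_def)
    then show ?thesis using p[of j] by (auto simp: axis_def)
  qed
  have "W = (\<chi> i j. if inv p i = j then 1 else 0)"
  proof -
    have "(inv p i = j) = (p j = i)" for i j
      using permutes_inverses[OF pp] by metis
    then show ?thesis using Wij by (simp add: vec_eq_iff)
  qed
  then have "perm_matrix W" unfolding perm_matrix_def using permutes_inv[OF pp] by blast
  moreover have "transpose W ** W = mat 1"
  proof -
    have "(transpose W ** W) $ i $ j = mat 1 $ i $ j" for i j
    proof -
      have "(transpose W ** W) $ i $ j = (\<Sum>k\<in>UNIV. (if p i = k then 1 else 0) * (if p j = k then 1 else 0))"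
        by (simp add: matrix_matrix_mult_def transpose_def Wij)
      also have "\<dots> = (if p i = p j then 1 else 0)"
        by (simp add: if_distrib[of "\<lambda>x. x * _"] cong: if_cong)
      also have "\<dots> = mat 1 $ i $ j" using injp by (auto simp: mat_def inj_def)
      finally show ?thesis .
    qed
    then show ?thesis by (simp add: vec_eq_iff)
  qed
  ultimately show ?thesis by blast
qed


lemma col_mult: "column j (W ** S) = W *v column j S"
  by (simp add: column_def matrix_matrix_mult_def matrix_vector_mult_def vec_eq_iff)

lemma gram_dot:
  fixes K :: "real^'n::finite^'m::finite"
  shows "(K *v x) \<bullet> (K *v x) = x \<bullet> ((transpose K ** K) *v x)"
  using inner_mat_transpose[of x "transpose K" "K *v x"]
  by (simp add: matrix_vector_mul_assoc[symmetric] del: transpose_matrix_vector)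

theorem theorem5:
  fixes Hg :: "real^'r^'m" and Sg :: "real^'n^'r"
    and Hs :: "real^'r^'m" and Ss :: "real^'n^'r"
  assumes "CARD('r) \<le> CARD('m)" and "CARD('r) \<le> CARD('n)"
    and "rank Hg = CARD('r)"
    and "\<forall>j. column j Sg \<in> simplex_B1plus"
    and "suff_scattered Sg simplex_B1plus"
    and "Hg ** Sg = Hs ** Ss"
    and "\<forall>j. column j Ss \<in> simplex_B1plus"
    and "\<forall>(H::real^'r^'m) (S::real^'n^'r).
           Hg ** Sg = H ** S \<and> (\<forall>j. column j S \<in> simplex_B1plus) \<longrightarrow>
           det (S ** transpose S) \<le> det (Ss ** transpose Ss)"
  shows "\<exists>Q. perm_matrix Q \<and> Hs = Hg ** transpose Q \<and> Ss = Q ** Sg"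
proof -
  let ?P = "simplex_B1plus :: (real^'r) set"
  obtain C g where MV: "is_MVIE ?P C g" and CH: "convex hull (col_set Sg) \<subseteq> ?P"
    and EC: "ellipsoid C g \<subseteq> convex hull (col_set Sg)"
    and POL: "polar_wrt (convex hull (col_set Sg)) g \<inter> frontier (polar_wrt (ellipsoid C g) g)
       = {v. v extreme_point_of (polar_wrt ?P g)}"
    using assms(5) unfolding suff_scattered_def by blast
  have psdC: "psd C" using MV by (simp add: is_MVIE_def)
  have symC: "transpose C = C" using psdC by (simp add: psd_def)
  have EP: "ellipsoid C g \<subseteq> ?P" using MV by (simp add: is_MVIE_def)
  have dC: "det C \<noteq> 0" by (rule detC_nz[OF MV])
  obtain Ci where Ci: "C ** Ci = mat 1" "Ci ** C = mat 1" using inv_ex[OF dC] by blast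
  have gE: "g \<in> ellipsoid C g" using ellipsoidI[of 0 C g] by simp
  have gP: "g \<in> ?P" using gE EP by blast
  \<comment> \<open>Step B: columns of Sg span\<close>
  have spanU: "x \<in> span (col_set Sg)" for x
  proof -
    have inspan: "C *v u \<in> span (col_set Sg)" if "norm u \<le> 1" for u
    proof -
      have "C *v u + g \<in> span (col_set Sg)"
        using ellipsoidI[OF that, of C g] EC convex_hull_subset_span by blast
      moreover have "g \<in> span (col_set Sg)"
        using gE EC convex_hull_subset_span by blast
      ultimately show ?thesis using span_diff by fastforce
    qed
    define u where "u = Ci *v x"
    have xu: "x = C *v u" by (simp add: u_def matrix_vector_mul_assoc Ci)
    show ?thesis
    proof (cases "u = 0")
      case True then show ?thesis using xu span_zero by simp
    next
      case False
      have "C *v ((1 / norm u) *\<^sub>R u) \<in> span (col_set Sg)" using False by (intro inspan) simp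
      then have "norm u *\<^sub>R (C *v ((1 / norm u) *\<^sub>R u)) \<in> span (col_set Sg)" by (rule span_scale)
      then show ?thesis using False xu by (simp add: matrix_vector_mult_scaleR)
    qed
  qed
  have "surj ((*v) Sg)"
  proof -
    have "col_set Sg \<subseteq> range ((*v) Sg)"
      by (auto simp: col_set_def matrix_vector_mult_basis[symmetric])
    moreover have "subspace (range ((*v) Sg))"
      using linear_subspace_image[OF matrix_vector_mul_linear[of Sg] subspace_UNIV] by simp
    ultimately have "span (col_set Sg) \<subseteq> range ((*v) Sg)" by (rule span_minimal)
    then show ?thesis using spanU by blast
  qed
  then obtain R where R: "Sg ** R = mat 1"
    using matrix_right_invertible_surjective[of Sg] by blast
  \<comment> \<open>Step C: left inverse of Hg\<close>
  have "inj ((*v) Hg)" using assms(3) full_rank_injective by blast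
  then obtain L where L: "L ** Hg = mat 1" using matrix_left_invertible_injective by blast
  \<comment> \<open>Step D\<close>
  define W0 where "W0 = L ** Hs"
  define W where "W = Ss ** R"
  have SgW0: "Sg = W0 ** Ss"
    by (metis L W0_def assms(6) matrix_mul_assoc matrix_mul_lid)
  have W0W: "W0 ** W = mat 1" using R SgW0 by (simp add: W_def matrix_mul_assoc)
  then have WW0: "W ** W0 = mat 1" using matrix_left_right_inverse by blast
  have SsW: "Ss = W ** Sg" using WW0 SgW0 by (metis matrix_mul_assoc matrix_mul_lid)
  have HsW: "Hs ** W = Hg" using R assms(6) by (metis W_def matrix_mul_assoc matrix_mul_rid)
  have HsHg: "Hs = Hg ** W0" using HsW WW0 by (metis matrix_mul_assoc matrix_mul_rid)
  \<comment> \<open>Step E\<close>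
  have "det (Sg ** transpose Sg) > 0"
  proof (rule det_pos_definite)
    show "transpose (Sg ** transpose Sg) = Sg ** transpose Sg" by (simp add: matrix_transpose_mul)
    fix x :: "real^'r" assume x0: "x \<noteq> 0"
    have "transpose R ** transpose Sg = mat 1" using R by (metis matrix_transpose_mul transpose_mat)
    then have "transpose Sg *v x \<noteq> 0" using x0
      by (metis matrix_vector_mul_assoc matrix_vector_mul_lid matrix_vector_mult_0_right)
    then have "(transpose Sg *v x) \<bullet> (transpose Sg *v x) > 0" by simp
    also have "(transpose Sg *v x) \<bullet> (transpose Sg *v x) = x \<bullet> ((Sg ** transpose Sg) *v x)"
      using gram_dot[of "transpose Sg" x] by simp
    finally show "x \<bullet> ((Sg ** transpose Sg) *v x) > 0" .
  qed
  moreover have "det (Sg ** transpose Sg) \<le> det (Ss ** transpose Ss)"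
    using assms(8) assms(4) by blast
  moreover have "det (Ss ** transpose Ss) = (det W)^2 * det (Sg ** transpose Sg)"
  proof -
    have "Ss ** transpose Ss = W ** (Sg ** transpose Sg) ** transpose W"
      unfolding SsW by (simp add: matrix_transpose_mul matrix_mul_assoc)
    then show ?thesis by (simp add: det_mul det_transpose power2_eq_square)
  qed
  ultimately have "(det W)^2 \<ge> 1" by (simp add: mult_le_cancel_right2)
  then have dW: "\<bar>det W\<bar> \<ge> 1" using abs_square_less_1 by (metis not_less)
  \<comment> \<open>Step F\<close>
  have WP_hull: "W *v y \<in> ?P" if "y \<in> convex hull (col_set Sg)" for y
  proof -
    have "(*v) W ` col_set Sg = col_set Ss"
      by (auto simp: col_set_def SsW col_mult)
    moreover have "col_set Ss \<subseteq> ?P" using assms(7) by (auto simp: col_set_def)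
    ultimately have "convex hull ((*v) W ` col_set Sg) \<subseteq> ?P"
      by (simp add: hull_minimal simplex_convex)
    then show ?thesis
      using that convex_hull_linear_image[OF matrix_vector_mul_linear, of W "col_set Sg"] by blast
  qed
  have EWP: "ellipsoid (W ** C) (W *v g) \<subseteq> ?P"
  proof
    fix x assume "x \<in> ellipsoid (W ** C) (W *v g)"
    then obtain u where u: "norm u \<le> 1" "x = (W ** C) *v u + W *v g" by (rule ellipsoidE)
    have "C *v u + g \<in> convex hull (col_set Sg)" using ellipsoidI[OF u(1)] EC by blast
    then have "W *v (C *v u + g) \<in> ?P" by (rule WP_hull)
    then show "x \<in> ?P" using u(2) by (simp add: matrix_vector_right_distrib matrix_vector_mul_assoc)
  qed
  \<comment> \<open>Step G\<close>
  have "\<bar>det (W ** C)\<bar> \<ge> \<bar>det C\<bar>"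
    using dW by (simp add: det_mul abs_mult mult_le_cancel_right1)
  then have uq: "(W ** C) ** transpose (W ** C) = C ** transpose C \<and> W *v g = g"
    using mvie_unique[OF simplex_convex dC _ EP EWP] mvie_det[OF MV] by blast
  have Wg: "W *v g = g" using uq by blast
  have W0g: "W0 *v g = g" using Wg W0W by (metis matrix_vector_mul_assoc matrix_vector_mul_lid)
  \<comment> \<open>Step H\<close>
  have normW: "norm (C *v (transpose W *v x)) = norm (C *v x)" for x
  proof -
    have "transpose (C ** transpose W) ** (C ** transpose W) = (W ** C) ** transpose (W ** C)"
      using symC by (simp add: matrix_transpose_mul matrix_mul_assoc)
    also have "\<dots> = transpose C ** C" using uq symC by simp
    finally have eq: "transpose (C ** transpose W) ** (C ** transpose W) = transpose C ** C" .
    have "(C *v (transpose W *v x)) \<bullet> (C *v (transpose W *v x)) = (C *v x) \<bullet> (C *v x)"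
      using gram_dot[of "C ** transpose W" x] gram_dot[of C x] eq
      by (simp add: matrix_vector_mul_assoc del: transpose_matrix_vector)
    then show ?thesis by (simp add: norm_eq_sqrt_inner)
  qed
  \<comment> \<open>Step I\<close>
  let ?Ext = "{v. v extreme_point_of (polar_wrt ?P g)}"
  have polE: "polar_wrt (ellipsoid C g) g = {x. norm (C *v x) \<le> 1}"
    by (rule polar_ellipsoid[OF symC])
  have extW: "transpose W *v a \<in> ?Ext" if a: "a \<in> ?Ext" for a
  proof -
    have aL: "a \<in> polar_wrt (convex hull (col_set Sg)) g \<inter> frontier (polar_wrt (ellipsoid C g) g)"
      using a POL by blast
    then have na: "norm (C *v a) = 1" using frontier_normC[OF dC] polE by auto
    have aP: "a \<in> polar_wrt ?P g" using a by (simp add: extreme_point_of_def)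
    have "transpose W *v a \<in> polar_wrt (convex hull (col_set Sg)) g"
      unfolding polar_wrt_def
    proof (intro CollectI ballI)
      fix y assume y: "y \<in> convex hull (col_set Sg)"
      have "(transpose W *v a) \<bullet> (y - g) = a \<bullet> (W *v y - g)"
        using inner_mat_transpose[of a W "y - g"] Wg
        by (simp add: matrix_vector_mult_diff_distrib del: transpose_matrix_vector)
      also have "\<dots> \<le> 1" using aP WP_hull[OF y] by (auto simp: polar_wrt_def)
      finally show "(transpose W *v a) \<bullet> (y - g) \<le> 1" .
    qed
    moreover have "transpose W *v a \<in> frontier (polar_wrt (ellipsoid C g) g)"
      using frontier_normC[OF dC] polE normW na by simp
    ultimately show ?thesis using POL by blast
  qed
  \<comment> \<open>Step J\<close>
  have finExt: "finite ?Ext"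
    unfolding simplex_hull by (intro finite_polyhedron_extreme_points polar_polyhedron) simp
  have injWt: "inj ((*v) (transpose W))"
  proof (rule injI)
    fix x y assume "transpose W *v x = transpose W *v y"
    then have "transpose W0 *v (transpose W *v x) = transpose W0 *v (transpose W *v y)" by simp
    moreover have "transpose W0 ** transpose W = mat 1"
      using WW0 by (metis matrix_transpose_mul transpose_mat)
    ultimately show "x = y" by (simp add: matrix_vector_mul_assoc del: transpose_matrix_vector)
  qed
  have imgExt: "(*v) (transpose W) ` ?Ext = ?Ext"
    by (rule endo_inj_surj[OF finExt]) (use extW injWt in \<open>auto simp: inj_on_def\<close>)
  have extW0: "transpose W0 *v a \<in> ?Ext" if a: "a \<in> ?Ext" for a
  proof -
    obtain b where b: "b \<in> ?Ext" "a = transpose W *v b" using a imgExt by blast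
    have "transpose W0 ** transpose W = mat 1"
      using WW0 by (metis matrix_transpose_mul transpose_mat)
    then have "transpose W0 *v a = b" using b(2)
      by (simp add: matrix_vector_mul_assoc del: transpose_matrix_vector)
    then show ?thesis using b(1) by simp
  qed
  \<comment> \<open>Step K\<close>
  have cptPol: "compact (polar_wrt ?P g)"
  proof -
    have "polar_wrt ?P g \<subseteq> {x. norm (C *v x) \<le> 1}" using polar_anti[OF EP] polE by blast
    also have "\<dots> \<subseteq> (*v) Ci ` cball 0 1"
    proof
      fix x assume "x \<in> {x. norm (C *v x) \<le> 1}"
      then have "C *v x \<in> cball 0 1" by simp
      moreover have "x = Ci *v (C *v x)" by (simp add: matrix_vector_mul_assoc Ci)
      ultimately show "x \<in> (*v) Ci ` cball 0 1" by blast
    qed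
    finally have "bounded (polar_wrt ?P g)"
      using bounded_subset bounded_linear_image[OF bounded_cball matrix_vector_mul_bounded_linear] by blast
    then show ?thesis using polar_closed by (simp add: compact_eq_bounded_closed)
  qed
  have clP: "closed ?P" using simplex_compact compact_imp_closed by blast
  \<comment> \<open>Step L\<close>
  have WP: "W *v y \<in> ?P" if "y \<in> ?P" for y
    by (rule maps_into[OF simplex_convex clP gP Wg cptPol _ that]) (use extW in simp)
  have W0P: "W0 *v y \<in> ?P" if "y \<in> ?P" for y
    by (rule maps_into[OF simplex_convex clP gP W0g cptPol _ that]) (use extW0 in simp)
  \<comment> \<open>Step M, N\<close>
  have pm: "perm_matrix W \<and> transpose W ** W = mat 1"
    by (rule perm_from_maps[OF WW0 W0W WP W0P])
  have "transpose W = W0"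
    using pm WW0 by (metis matrix_mul_assoc matrix_mul_lid matrix_mul_rid)
  then have "Hs = Hg ** transpose W" using HsHg by simp
  then show ?thesis using pm SsW by blast
qed


end
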